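(* Let $(X,\|\cdot\|)$ be a normed linear space, let $I$ be a non-trivial admissible ideal in $\mathbb{N}$ and let $r>0$. A sequence $x=\{x_k\}_{k\in\mathbb{N}}$ in $X$ is rough $I$-statistically convergent with roughness degree $r$ to $\xi\in X$ if and only if there exists a sequence $y=\{y_k\}_{k\in\mathbb{N}}$ in $X$ which is $I$-statistically convergent to $\xi$ and satisfies $\|x_k-y_k\|\le r$ for all $k\in\mathbb{N}$.
   Context: An ideal $I$ in $\mathbb{N}$ is a family of subsets of $\mathbb{N}$ containing $\emptyset$, closed under finite unions and under taking subsets; it is non-trivial if $\mathbb{N}\notin I$ and admissible if $\{n\}\in I$ for every $n$. A sequence $y$ in $X$ is $I$-statistically convergent to $\xi$ if for every $\varepsilon>0$ and $\delta>0$, $\{n\in\mathbb{N}:\frac1n|\{k\le n:\|y_k-\xi\|\ge\varepsilon\}|\ge\delta\}\in I$. A sequence $x$ is rough $I$-statistically convergent with roughness degree $r\ge0$ to $\xi$ if for every $\varepsilon>0$ and $\delta>0$, $\{n\in\mathbb{N}:\frac1n|\{k\le n:\|x_k-\xi\|\ge r+\varepsilon\}|\ge\delta\}\in I$. *)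

theory Defs
  imports "HOL-Analysis.Analysis"
begin

text \<open>Convention: the paper's natural numbers are the positive integers {1,2,...},
  rendered as the set PosNat = {1..} of type nat. Sequences are functions nat => 'a
  of which only the values at positive indices matter.\<close>

abbreviation PosNat :: "nat set" where "PosNat \<equiv> {1..}"

definition ideal_on_N :: "nat set set \<Rightarrow> bool" where
  "ideal_on_N I \<longleftrightarrow> (\<forall>A\<in>I. A \<subseteq> PosNat) \<and> {} \<in> I \<and>
     (\<forall>A\<in>I. \<forall>B\<in>I. A \<union> B \<in> I) \<and> (\<forall>A\<in>I. \<forall>B. B \<subseteq> A \<longrightarrow> B \<in> I)"

definition nontrivial_ideal :: "nat set set \<Rightarrow> bool" where
  "nontrivial_ideal I \<longleftrightarrow> PosNat \<notin> I"

definition admissible_ideal :: "nat set set \<Rightarrow> bool" where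
  "admissible_ideal I \<longleftrightarrow> (\<forall>n\<in>PosNat. {n} \<in> I)"

definition I_stat_conv ::
  "nat set set \<Rightarrow> (nat \<Rightarrow> 'a::real_normed_vector) \<Rightarrow> 'a \<Rightarrow> bool" where
  "I_stat_conv I y \<xi> \<longleftrightarrow> (\<forall>\<epsilon>>0. \<forall>\<delta>>0.
     {n\<in>PosNat. card {k\<in>{1..n}. norm (y k - \<xi>) \<ge> \<epsilon>} / real n \<ge> \<delta>} \<in> I)"

definition rough_I_stat_conv ::
  "nat set set \<Rightarrow> real \<Rightarrow> (nat \<Rightarrow> 'a::real_normed_vector) \<Rightarrow> 'a \<Rightarrow> bool" where
  "rough_I_stat_conv I r x \<xi> \<longleftrightarrow> (\<forall>\<epsilon>>0. \<forall>\<delta>>0.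
     {n\<in>PosNat. card {k\<in>{1..n}. norm (x k - \<xi>) \<ge> r + \<epsilon>} / real n \<ge> \<delta>} \<in> I)"

end

theory Submission
  imports Defs
begin

theorem theorem3p5:
  fixes I :: "nat set set" and r :: real
    and x :: "nat \<Rightarrow> 'a::real_normed_vector" and \<xi> :: 'a
  assumes "ideal_on_N I" and "nontrivial_ideal I" and "admissible_ideal I"
    and "r > 0"
  shows "rough_I_stat_conv I r x \<xi> \<longleftrightarrow>
    (\<exists>y :: nat \<Rightarrow> 'a. I_stat_conv I y \<xi> \<and> (\<forall>k\<in>PosNat. norm (x k - y k) \<le> r))"
proof
  assume R: "rough_I_stat_conv I r x \<xi>"
  define c where "c k = (if norm (x k - \<xi>) \<le> r then 0 else (norm (x k - \<xi>) - r) / norm (x k - \<xi>))" for k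
  define y where "y k = \<xi> + c k *\<^sub>R (x k - \<xi>)" for k
  have yn: "norm (y k - \<xi>) = (if norm (x k - \<xi>) \<le> r then 0 else norm (x k - \<xi>) - r)" for k
  proof (cases "norm (x k - \<xi>) \<le> r")
    case True thus ?thesis by (simp add: y_def c_def)
  next
    case False
    hence p: "norm (x k - \<xi>) > 0" using assms(4) by linarith
    have "norm (y k - \<xi>) = \<bar>c k\<bar> * norm (x k - \<xi>)" by (simp add: y_def)
    also have "\<dots> = norm (x k - \<xi>) - r" using False p by (simp add: c_def)
    finally show ?thesis using False by simp
  qed
  have xy: "norm (x k - y k) \<le> r" for k
  proof (cases "norm (x k - \<xi>) \<le> r")
    case True thus ?thesis by (simp add: y_def c_def)
  next
    case False
    hence p: "norm (x k - \<xi>) > 0" using assms(4) by linarith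
    have "x k - y k = (1 - c k) *\<^sub>R (x k - \<xi>)" by (simp add: y_def algebra_simps)
    hence "norm (x k - y k) = \<bar>1 - c k\<bar> * norm (x k - \<xi>)" by simp
    also have "1 - c k = r / norm (x k - \<xi>)" using False p by (simp add: c_def field_simps)
    finally show ?thesis using p assms(4) by simp
  qed
  have eq: "(\<epsilon>::real) > 0 \<Longrightarrow> (norm (y k - \<xi>) \<ge> \<epsilon>) = (norm (x k - \<xi>) \<ge> r + \<epsilon>)" for k \<epsilon>
    using yn[of k] by auto
  have "I_stat_conv I y \<xi>"
    unfolding I_stat_conv_def
  proof (intro allI impI)
    fix \<epsilon> \<delta> :: real assume e: "\<epsilon> > 0" and d: "\<delta> > 0"
    have "{k\<in>{1..n}. norm (y k - \<xi>) \<ge> \<epsilon>} = {k\<in>{1..n}. norm (x k - \<xi>) \<ge> r + \<epsilon>}" for n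
      using eq[OF e] by auto
    thus "{n\<in>PosNat. card {k\<in>{1..n}. norm (y k - \<xi>) \<ge> \<epsilon>} / real n \<ge> \<delta>} \<in> I"
      using R e d unfolding rough_I_stat_conv_def by simp
  qed
  thus "\<exists>y :: nat \<Rightarrow> 'a. I_stat_conv I y \<xi> \<and> (\<forall>k\<in>PosNat. norm (x k - y k) \<le> r)"
    using xy by blast
next
  assume "\<exists>y :: nat \<Rightarrow> 'a. I_stat_conv I y \<xi> \<and> (\<forall>k\<in>PosNat. norm (x k - y k) \<le> r)"
  then obtain y where Y: "I_stat_conv I y \<xi>" and b: "\<forall>k\<in>PosNat. norm (x k - y k) \<le> r" by blast
  have sub: "\<forall>A\<in>I. \<forall>B. B \<subseteq> A \<longrightarrow> B \<in> I" using assms(1) unfolding ideal_on_N_def by blast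
  show "rough_I_stat_conv I r x \<xi>"
    unfolding rough_I_stat_conv_def
  proof (intro allI impI)
    fix \<epsilon> \<delta> :: real assume e: "\<epsilon> > 0" and d: "\<delta> > 0"
    have A: "{n\<in>PosNat. card {k\<in>{1..n}. norm (y k - \<xi>) \<ge> \<epsilon>} / real n \<ge> \<delta>} \<in> I"
      using Y e d unfolding I_stat_conv_def by blast
    have ss: "{k\<in>{1..n}. norm (x k - \<xi>) \<ge> r + \<epsilon>} \<subseteq> {k\<in>{1..n}. norm (y k - \<xi>) \<ge> \<epsilon>}" for n
    proof
      fix k assume k: "k \<in> {k\<in>{1..n}. norm (x k - \<xi>) \<ge> r + \<epsilon>}"
      have "norm (x k - \<xi>) \<le> norm (x k - y k) + norm (y k - \<xi>)"
        using norm_triangle_ineq[of "x k - y k" "y k - \<xi>"] by simp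
      moreover have "norm (x k - y k) \<le> r" using b k by auto
      ultimately show "k \<in> {k\<in>{1..n}. norm (y k - \<xi>) \<ge> \<epsilon>}" using k by auto
    qed
    have "card {k\<in>{1..n}. norm (x k - \<xi>) \<ge> r + \<epsilon>} \<le> card {k\<in>{1..n}. norm (y k - \<xi>) \<ge> \<epsilon>}" for n
      by (rule card_mono[OF _ ss]) simp
    hence "card {k\<in>{1..n}. norm (x k - \<xi>) \<ge> r + \<epsilon>} / real n \<le> card {k\<in>{1..n}. norm (y k - \<xi>) \<ge> \<epsilon>} / real n" for n
      by (simp add: divide_right_mono)
    hence "{n\<in>PosNat. card {k\<in>{1..n}. norm (x k - \<xi>) \<ge> r + \<epsilon>} / real n \<ge> \<delta>}
        \<subseteq> {n\<in>PosNat. card {k\<in>{1..n}. norm (y k - \<xi>) \<ge> \<epsilon>} / real n \<ge> \<delta>}"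
      by (auto intro: order_trans)
    thus "{n\<in>PosNat. card {k\<in>{1..n}. norm (x k - \<xi>) \<ge> r + \<epsilon>} / real n \<ge> \<delta>} \<in> I"
      using sub A by blast
  qed
qed

end
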